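(* Let $I$ be a real interval of length $H \geq 1$. For every polynomial $P(T) = a_0 T^2 + a_1 T + a_2 \in \mathbb{Z}[T]$ with $a_0 \neq 0$ and every integer $k$, the number of integer points $(x,y) \in (I \times I) \cap \mathbb{Z}^2$ satisfying $P(x) + P(y) = k$ is at most $\sup_{1 \leq n \leq 144 H^4} r(n)$.
   Context: For an integer $n \geq 0$, $r(n)$ denotes the number of pairs of integers $(x,y)$ with $x^2 + y^2 = n$. *)

theory Defs
  imports Complex_Main
begin

definition r :: "nat \<Rightarrow> nat" where
  "r n = card {(x::int, y::int). x^2 + y^2 = int n}"

end

theory Submission
  imports Defs
begin

lemma r_finite: "finite {(x::int, y::int). x^2 + y^2 = int n}"
proof -
  have "{(x::int, y::int). x^2 + y^2 = int n} \<subseteq> {-int n..int n} \<times> {-int n..int n}"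
  proof (clarsimp)
    fix x y :: int assume h: "x^2 + y^2 = int n"
    have sq: "\<bar>z\<bar> \<le> z^2" for z :: int
    proof (cases "z = 0")
      case False
      then have "1 \<le> \<bar>z\<bar>" by simp
      then have "\<bar>z\<bar> * 1 \<le> \<bar>z\<bar> * \<bar>z\<bar>" by (intro mult_left_mono) auto
      then show ?thesis by (simp add: power2_eq_square abs_mult_self_eq)
    qed simp
    have ax: "\<bar>x\<bar> \<le> x^2" and ay: "\<bar>y\<bar> \<le> y^2" by (rule sq)+
    have "x^2 \<ge> 0" "y^2 \<ge> 0" by auto
    then show "- int n \<le> x \<and> x \<le> int n \<and> - int n \<le> y \<and> y \<le> int n" using h ax ay by linarith
  qed
  then show ?thesis by (rule finite_subset) auto
qed

lemma r1: "2 \<le> r 1"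
proof -
  have "{(1::int,0::int),(0,1)} \<subseteq> {(x::int, y::int). x^2 + y^2 = int 1}" by auto
  from card_mono[OF r_finite this] show ?thesis by (simp add: r_def)
qed

lemma card_le2: "S \<subseteq> {p, q} \<Longrightarrow> card S \<le> 2"
proof -
  assume "S \<subseteq> {p, q}"
  then have "card S \<le> card {p, q}" by (intro card_mono) auto
  also have "\<dots> \<le> 2" by (simp add: card_insert_if)
  finally show ?thesis .
qed

lemma abs_sq_le: "\<bar>t::real\<bar> \<le> c \<Longrightarrow> t^2 \<le> c^2"
  by (metis abs_ge_zero abs_le_square_iff abs_of_nonneg order_trans)

lemma main:
  fixes a H :: real and a0 a1 a2 k :: int
  assumes H: "H \<ge> 1" and a0: "a0 \<noteq> 0"
    and S_def: "S = {(x::int, y::int). real_of_int x \<in> I \<and> real_of_int y \<in> I \<and>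
            (a0*x^2 + a1*x + a2) + (a0*y^2 + a1*y + a2) = k}"
    and I: "I \<subseteq> {a..a+H}"
  shows "\<exists>n. 1 \<le> n \<and> real n \<le> 144 * H^4 \<and> card S \<le> r n"
proof -
  define F where "F = (\<lambda>x y::int. (a0*x^2 + a1*x + a2) + (a0*y^2 + a1*y + a2))"
  have memS: "(x,y) \<in> S \<longleftrightarrow> real_of_int x \<in> I \<and> real_of_int y \<in> I \<and> F x y = k" for x y
    by (simp add: S_def F_def)
  have bnd: "\<bar>real_of_int u - real_of_int w\<bar> \<le> H" if "real_of_int u \<in> I" "real_of_int w \<in> I" for u w
  proof -
    have "a \<le> real_of_int u" "real_of_int u \<le> a + H" "a \<le> real_of_int w" "real_of_int w \<le> a + H"
      using that I by auto
    then show ?thesis by (simp add: abs_le_iff)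
  qed
  show ?thesis
  proof (cases "\<exists>x1 y1 x2 y2. (x1,y1) \<in> S \<and> (x2,y2) \<in> S \<and> x1 + y1 \<noteq> x2 + y2")
    case True
    then obtain x1 y1 x2 y2 where p: "(x1,y1) \<in> S" and q: "(x2,y2) \<in> S" and ne: "x1 + y1 \<noteq> x2 + y2"
      by blast
    define D where "D = (x1 + y1) - (x2 + y2)"
    define M where "M = (x2-x1)^2 + (y2-x1)^2 - (y1-x1)^2"
    define b where "b = 2*a0*x1 + a1"
    define Q where "Q = (\<lambda>x y. (2*D*(x-x1)+M)^2 + (2*D*(y-x1)+M)^2)"
    have D0: "D \<noteq> 0" using ne by (simp add: D_def)
    have Fp: "F x1 y1 = k" and Fq: "F x2 y2 = k" using p q memS by auto
    have hM: "a0 * M = b * D"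
    proof -
      have "F x2 y2 - F x1 y1 = 0" using Fp Fq by simp
      then show ?thesis unfolding F_def M_def b_def D_def by (simp add: algebra_simps power2_eq_square)
    qed
    have key: "a0 * (Q x y - Q x1 y1) = 4*D*D*(F x y - F x1 y1)" for x y
    proof -
      have "a0 * (Q x y - Q x1 y1) = 4*D*(D*a0*((x-x1)^2+(y-x1)^2 - (y1-x1)^2) + (a0*M)*((x-x1)+(y-x1) - (y1-x1)))"
        unfolding Q_def by (simp add: algebra_simps power2_eq_square)
      also have "\<dots> = 4*D*(D*a0*((x-x1)^2+(y-x1)^2 - (y1-x1)^2) + (b*D)*((x-x1)+(y-x1) - (y1-x1)))"
        using hM by simp
      also have "\<dots> = 4*D*D*(F x y - F x1 y1)"
        unfolding F_def b_def by (simp add: algebra_simps power2_eq_square)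
      finally show ?thesis .
    qed
    have Qc: "Q x y = Q x1 y1" if "(x,y) \<in> S" for x y
    proof -
      have "F x y = k" using that memS by auto
      then have "a0 * (Q x y - Q x1 y1) = 0" using key Fp by simp
      then show ?thesis using a0 by simp
    qed
    define n where "n = nat (Q x1 y1)"
    have Qn: "Q x1 y1 = int n" unfolding n_def Q_def by simp
    have px: "real_of_int x1 \<in> I" "real_of_int y1 \<in> I" and qx: "real_of_int x2 \<in> I" "real_of_int y2 \<in> I"
      using p q memS by auto
    have e1: "\<bar>real_of_int (y1 - x1)\<bar> \<le> H" using bnd[OF px(2) px(1)] by simp
    have e2: "\<bar>real_of_int (x2 - x1)\<bar> \<le> H" using bnd[OF qx(1) px(1)] by simp
    have e3: "\<bar>real_of_int (y2 - x1)\<bar> \<le> H" using bnd[OF qx(2) px(1)] by simp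
    have eD: "\<bar>real_of_int D\<bar> \<le> 2*H"
      using bnd[OF px(1) qx(1)] bnd[OF px(2) qx(2)] unfolding D_def by simp
    have s1: "real_of_int (y1 - x1)^2 \<le> H^2" by (rule abs_sq_le[OF e1])
    have s2: "real_of_int (x2 - x1)^2 \<le> H^2" by (rule abs_sq_le[OF e2])
    have s3: "real_of_int (y2 - x1)^2 \<le> H^2" by (rule abs_sq_le[OF e3])
    have eM: "\<bar>real_of_int M\<bar> \<le> 2*H^2"
      unfolding M_def using s1 s2 s3 by (simp add: abs_le_iff) (smt (verit) zero_le_power2)
    have eDy: "\<bar>real_of_int (2*D*(y1-x1))\<bar> \<le> 4*H^2"
    proof -
      have "\<bar>real_of_int (2*D*(y1-x1))\<bar> = 2*\<bar>real_of_int D\<bar>*\<bar>real_of_int (y1-x1)\<bar>"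
        by (simp add: abs_mult)
      also have "\<dots> \<le> 2*(2*H)*H" using eD e1 H
        by (intro mult_mono) auto
      finally show ?thesis by (simp add: power2_eq_square)
    qed
    have t1: "real_of_int M^2 \<le> (2*H^2)^2" by (rule abs_sq_le[OF eM])
    have t2: "real_of_int (2*D*(y1-x1) + M)^2 \<le> (6*H^2)^2"
      by (rule abs_sq_le) (use eM eDy in linarith)
    have "real n = real_of_int (Q x1 y1)" using Qn by simp
    also have "\<dots> = real_of_int M^2 + real_of_int (2*D*(y1-x1) + M)^2"
      unfolding Q_def by simp
    also have "\<dots> \<le> (2*H^2)^2 + (6*H^2)^2" using t1 t2 by linarith
    also have "\<dots> \<le> 144 * H^4" using H by (simp add: power2_eq_square power4_eq_xxxx)
    finally have nb: "real n \<le> 144 * H^4" .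
    have n1: "1 \<le> n"
    proof (rule ccontr)
      assume "\<not> 1 \<le> n"
      then have "Q x1 y1 = 0" using Qn by simp
      moreover have "Q x1 y1 = M^2 + (2*D*(y1-x1) + M)^2" unfolding Q_def by simp
      ultimately have "M^2 + (2*D*(y1-x1) + M)^2 = 0" by linarith
      then have m0: "M = 0" and "2*D*(y1-x1) + M = 0"
        using sum_power2_eq_zero_iff[of M "2*D*(y1-x1) + M"] by auto
      then have "2*D*(y1-x1) = 0" by simp
      then have y1: "y1 = x1" using D0 by simp
      have "Q x2 y2 = 0" using Qc[OF q] \<open>Q x1 y1 = 0\<close> by simp
      moreover have "Q x2 y2 = (2*D*(x2-x1))^2 + (2*D*(y2-x1))^2" using m0 unfolding Q_def by simp
      ultimately have "(2*D*(x2-x1))^2 + (2*D*(y2-x1))^2 = 0" by linarith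
      then have "2*D*(x2-x1) = 0" "2*D*(y2-x1) = 0"
        using sum_power2_eq_zero_iff[of "2*D*(x2-x1)" "2*D*(y2-x1)"] by auto
      then have "x2 = x1" "y2 = x1" using D0 by simp_all
      then show False using ne y1 by simp
    qed
    define f where "f = (\<lambda>(x::int,y::int). (2*D*(x-x1)+M, 2*D*(y-x1)+M))"
    have inj: "inj_on f S" unfolding f_def inj_on_def using D0 by auto
    have img: "f ` S \<subseteq> {(u::int, v::int). u^2 + v^2 = int n}"
    proof
      fix z assume "z \<in> f ` S"
      then obtain x y where xy: "(x,y) \<in> S" and z: "z = f (x,y)" by auto
      then have "Q x y = int n" using Qc Qn by simp
      then show "z \<in> {(u::int, v::int). u^2 + v^2 = int n}"
        unfolding z f_def Q_def by simp
    qed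
    have "card S \<le> r n" unfolding r_def by (rule card_inj_on_le[OF inj img r_finite])
    then show ?thesis using n1 nb by blast
  next
    case False
    have "card S \<le> 2"
    proof (cases "S = {}")
      case True then show ?thesis by simp
    next
      case ne: False
      then obtain x1 y1 where p: "(x1,y1) \<in> S" by auto
      have "S \<subseteq> {(x1,y1),(y1,x1)}"
      proof
        fix z assume zS: "z \<in> S"
        obtain x y where zxy: "z = (x,y)" by (cases z)
        have q: "(x,y) \<in> S" using zS zxy by simp
        show "z \<in> {(x1,y1),(y1,x1)}"
        proof (cases "(x,y) = (y1,x1)")
          case True then show ?thesis using zxy by simp
        next
          case nq: False
        have s: "x + y = x1 + y1" using False p q by blast
        have "F x y = F x1 y1" using p q memS by auto
        then have "a0 * (x^2 + y^2 - x1^2 - y1^2) + a1*(x + y - x1 - y1) = 0"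
          unfolding F_def by (simp add: algebra_simps)
        then have "a0 * (x^2 + y^2 - x1^2 - y1^2) = 0" using s by simp
        then have sq: "x^2 + y^2 = x1^2 + y1^2" using a0 by simp
        have yy: "y = x1 + y1 - x" using s by simp
        have "(x - x1) * (x - y1) = 0"
          using sq unfolding yy by (simp add: algebra_simps power2_eq_square)
        then have "x = x1 \<or> x = y1" by simp
        then show ?thesis using nq yy zxy by auto
        qed
      qed
      then show ?thesis by (rule card_le2)
    qed
    then have "card S \<le> r 1" using r1 by simp
    moreover have "real (1::nat) \<le> 144 * H^4"
    proof -
      have "1 \<le> H^4" using H by (simp add: one_le_power)
      then show ?thesis by simp
    qed
    ultimately show ?thesis by blast
  qed
qed

theorem corollary2:
  fixes I :: "real set" and a H :: real and a0 a1 a2 k :: int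
  assumes "H \<ge> 1"
    and "{a<..<a+H} \<subseteq> I" and "I \<subseteq> {a..a+H}"
    and "a0 \<noteq> 0"
  shows "card {(x::int, y::int). real_of_int x \<in> I \<and> real_of_int y \<in> I \<and>
            (a0*x^2 + a1*x + a2) + (a0*y^2 + a1*y + a2) = k}
         \<le> Max {r n | n. 1 \<le> n \<and> real n \<le> 144 * H^4}"
proof -
  obtain n where n: "1 \<le> n" "real n \<le> 144 * H^4"
    and c: "card {(x::int, y::int). real_of_int x \<in> I \<and> real_of_int y \<in> I \<and>
            (a0*x^2 + a1*x + a2) + (a0*y^2 + a1*y + a2) = k} \<le> r n"
    using main[OF assms(1) assms(4) refl assms(3)] by blast
  have fin: "finite {r n | n. 1 \<le> n \<and> real n \<le> 144 * H^4}"
  proof -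
    have "{r n | n. 1 \<le> n \<and> real n \<le> 144 * H^4} \<subseteq> r ` {..nat \<lceil>144 * H^4\<rceil>}"
    proof clarify
      fix m :: nat assume "1 \<le> m" "real m \<le> 144 * H^4"
      then have "m \<le> nat \<lceil>144 * H^4\<rceil>" by linarith
      then show "r m \<in> r ` {..nat \<lceil>144 * H^4\<rceil>}" by auto
    qed
    then show ?thesis by (rule finite_subset) auto
  qed
  have "r n \<le> Max {r n | n. 1 \<le> n \<and> real n \<le> 144 * H^4}"
    by (rule Max_ge[OF fin]) (use n in blast)
  then show ?thesis using c by linarith
qed

end
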